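(* Let $\zeta_c\in\mathcal C$ be a simple critical point, with representative critical point $x_{*,c}$ and branch value $\lambda_c$. Then there exist a neighborhood $\mathcal O$ of $\zeta_c$ and unique $C^1$ maps $\zeta\mapsto x_*(\zeta)$, $\zeta\mapsto\lambda(\zeta)$ on $\mathcal O$ with $(x_*(\zeta_c),\lambda(\zeta_c))=(x_{*,c},\lambda_c)$ and $F(\lambda(\zeta),x_*(\zeta);\zeta)=\partial_yF(\lambda(\zeta),x_*(\zeta);\zeta)=0$. If in addition $x_*(\zeta)$ remains a representative of the unique dominant orbit for $\zeta\in\mathcal O$, then $\rho_*(\zeta)=|x_*(\zeta)|$ on $\mathcal O$, and $\rho_*$ is $C^1$ on $\mathcal O$.
   Context: Fix integers $N\ge1$ and $2\le s_1<\dots<s_N$; put $s=\gcd(s_1,\dots,s_N)$. For $\zeta\in\mathbb C^N$ set $F(y,x;\zeta)=y-1-\sum_{n=1}^N\zeta_n x^{s_n}y^{s_n}$. The Taylor branch $U(x;\zeta)$ is the unique germ analytic at $x=0$ with $U(0;\zeta)=1$ and $F(U(x;\zeta),x;\zeta)=0$; its analytic continuation along paths is called the chosen Taylor sheet. $\rho_*(\zeta)$ is the supremum of $\rho>0$ such that $U(\cdot;\zeta)$ extends analytically to $|x|<\rho$. Dominant regime: $\rho_*(\zeta)<\infty$ and the chosen Taylor sheet has exactly $s$ singular points on $|x|=\rho_*(\zeta)$, forming one orbit $\{e^{2\pi ij/s}x_*(\zeta)\}_{j=0}^{s-1}$. The branch value at a singular point $x_*$ is $\lambda=\lim_{x\to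 x_*}U(x;\zeta)$ along the sheet (finite). $\mathcal C$ is the set of $\zeta$ in the dominant regime with $\rho_*(\zeta)=1$. $\zeta_c\in\mathcal C$ is a simple critical point if for a representative $x_{*,c}$ with branch value $\lambda_c$: $F=\partial_yF=0$ and $\partial_y^2F\ne0$ at $(\lambda_c,x_{*,c};\zeta_c)$. *)

theory Defs
  imports "HOL-Analysis.Analysis"
begin

text \<open>Coefficient vectors zeta live in complex^'n (N = CARD('n)); the exponents
  are s :: 'n => nat (injective, all >= 2).\<close>

definition Fpoly :: "('n::finite \<Rightarrow> nat) \<Rightarrow> complex \<Rightarrow> complex \<Rightarrow> complex^'n \<Rightarrow> complex" where
  "Fpoly s y x \<zeta> = y - 1 - (\<Sum>n\<in>UNIV. \<zeta>$n * x ^ (s n) * y ^ (s n))"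

definition Fy :: "('n::finite \<Rightarrow> nat) \<Rightarrow> complex \<Rightarrow> complex \<Rightarrow> complex^'n \<Rightarrow> complex" where
  "Fy s y x \<zeta> = deriv (\<lambda>w. Fpoly s w x \<zeta>) y"

definition Fyy :: "('n::finite \<Rightarrow> nat) \<Rightarrow> complex \<Rightarrow> complex \<Rightarrow> complex^'n \<Rightarrow> complex" where
  "Fyy s y x \<zeta> = deriv (\<lambda>w. Fy s w x \<zeta>) y"

definition taylor_ext :: "('n::finite \<Rightarrow> nat) \<Rightarrow> complex^'n \<Rightarrow> real \<Rightarrow> (complex \<Rightarrow> complex) \<Rightarrow> bool" where
  "taylor_ext s \<zeta> R g \<longleftrightarrow> g holomorphic_on ball 0 R \<and> g 0 = 1 \<and>
     (\<forall>x\<in>ball 0 R. Fpoly s (g x) x \<zeta> = 0)"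

definition rho_star :: "('n::finite \<Rightarrow> nat) \<Rightarrow> complex^'n \<Rightarrow> ereal" where
  "rho_star s \<zeta> = Sup {ereal R | R. R > 0 \<and> (\<exists>g. taylor_ext s \<zeta> R g)}"

definition sheet_sing_pts :: "('n::finite \<Rightarrow> nat) \<Rightarrow> complex^'n \<Rightarrow> complex set" where
  "sheet_sing_pts s \<zeta> = (let \<rho> = real_of_ereal (rho_star s \<zeta>) in
     {x0. cmod x0 = \<rho> \<and>
       \<not> (\<exists>r>0. \<exists>h. h holomorphic_on (ball 0 \<rho> \<union> ball x0 r) \<and> h 0 = 1 \<and>
            (\<forall>x\<in>ball 0 \<rho> \<union> ball x0 r. Fpoly s (h x) x \<zeta> = 0))})"

definition sgcd :: "('n::finite \<Rightarrow> nat) \<Rightarrow> nat" where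
  "sgcd s = Gcd (range s)"

definition orbit :: "('n::finite \<Rightarrow> nat) \<Rightarrow> complex \<Rightarrow> complex set" where
  "orbit s x0 = {cis (2 * pi * real j / real (sgcd s)) * x0 | j. j < sgcd s}"

definition dominant :: "('n::finite \<Rightarrow> nat) \<Rightarrow> complex^'n \<Rightarrow> bool" where
  "dominant s \<zeta> \<longleftrightarrow> rho_star s \<zeta> < \<infinity> \<and> (\<exists>x0. sheet_sing_pts s \<zeta> = orbit s x0)"

definition branch_value :: "('n::finite \<Rightarrow> nat) \<Rightarrow> complex^'n \<Rightarrow> complex \<Rightarrow> complex \<Rightarrow> bool" where
  "branch_value s \<zeta> x0 lam \<longleftrightarrow> (let \<rho> = real_of_ereal (rho_star s \<zeta>) in
     \<exists>g. taylor_ext s \<zeta> \<rho> g \<and> (g \<longlongrightarrow> lam) (at x0 within ball 0 \<rho>))"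

definition critset :: "('n::finite \<Rightarrow> nat) \<Rightarrow> (complex^'n) set" where
  "critset s = {\<zeta>. dominant s \<zeta> \<and> rho_star s \<zeta> = 1}"

definition simple_critical :: "('n::finite \<Rightarrow> nat) \<Rightarrow> complex^'n \<Rightarrow> complex \<Rightarrow> complex \<Rightarrow> bool" where
  "simple_critical s \<zeta>c xc lc \<longleftrightarrow> \<zeta>c \<in> critset s \<and> xc \<in> sheet_sing_pts s \<zeta>c \<and>
     branch_value s \<zeta>c xc lc \<and> Fpoly s lc xc \<zeta>c = 0 \<and> Fy s lc xc \<zeta>c = 0 \<and> Fyy s lc xc \<zeta>c \<noteq> 0"

definition C1_on :: "'a::real_normed_vector set \<Rightarrow> ('a \<Rightarrow> 'b::real_normed_vector) \<Rightarrow> bool" where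
  "C1_on S f \<longleftrightarrow> (\<exists>f'. (\<forall>z\<in>S. (f has_derivative blinfun_apply (f' z)) (at z)) \<and> continuous_on S f')"

end

theory Submission
  imports Defs
begin


lemma C1_coord:
  fixes f :: "complex^'n::finite \<Rightarrow> 'b::real_normed_vector" and L :: "complex \<Rightarrow> 'b"
  assumes L: "bounded_linear L"
    and e: "\<And>i. continuous_on S (e i)"
    and d: "\<And>z. z\<in>S \<Longrightarrow> (f has_derivative (\<lambda>h. L (\<Sum>i\<in>UNIV. h$i * e i z))) (at z)"
  shows "C1_on S f"
proof -
  define F where "F z = (\<Sum>i\<in>UNIV. Blinfun L o\<^sub>L (blinfun_mult_left (e i z) o\<^sub>L Blinfun (\<lambda>h. h$i)))" for z
  have bl: "bounded_linear (\<lambda>h::complex^'n. h$i)" for i by (rule bounded_linear_vec_nth)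
  have FA: "blinfun_apply (F z) = (\<lambda>h. L (\<Sum>i\<in>UNIV. h$i * e i z))" for z
    by (rule ext) (simp add: F_def blinfun.sum_left bounded_linear_Blinfun_apply[OF L]
        bounded_linear_Blinfun_apply[OF bl] real_vector.linear_sum[OF bounded_linear.linear[OF L]])
  have "continuous_on S F"
    unfolding F_def by (intro continuous_intros e)
  then show ?thesis unfolding C1_on_def using d FA by metis
qed


definition CD :: "(complex^'n::finite) set \<Rightarrow> (complex^'n \<Rightarrow> complex) \<Rightarrow> ('n \<Rightarrow> complex^'n \<Rightarrow> complex) \<Rightarrow> bool" where
  "CD S f d \<longleftrightarrow> open S \<and> (\<forall>i. continuous_on S (d i)) \<and>
     (\<forall>z\<in>S. (f has_derivative (\<lambda>h. \<Sum>i\<in>UNIV. h$i * d i z)) (at z))"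

lemma CD_C1: "CD S f d \<Longrightarrow> C1_on S f"
  unfolding CD_def by (rule C1_coord[where L=id and e=d]) (auto simp: id_def)

lemma CD_cont: "CD S f d \<Longrightarrow> continuous_on S f"
  unfolding CD_def
  by (meson continuous_at_imp_continuous_on has_derivative_continuous)

lemma CD_subset: "CD S f d \<Longrightarrow> open T \<Longrightarrow> T \<subseteq> S \<Longrightarrow> CD T f d"
  unfolding CD_def by (meson continuous_on_subset subsetD)

lemma CD_const: "open S \<Longrightarrow> CD S (\<lambda>z. c) (\<lambda>i z. 0)"
  unfolding CD_def by auto

lemma CD_nth: fixes S :: "(complex^'n::finite) set" and j :: 'n
  shows "open S \<Longrightarrow> CD S (\<lambda>z. z$j) (\<lambda>i z. if i = j then 1 else 0)"
  unfolding CD_def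
proof (intro conjI ballI allI)
  fix z assume "z \<in> S"
  have "((\<lambda>z::complex^'n. z$j) has_derivative (\<lambda>h. h$j)) (at z)"
    by (rule bounded_linear_imp_has_derivative[OF bounded_linear_vec_nth])
  moreover have "(\<lambda>h::complex^'n. h$j) = (\<lambda>h. \<Sum>i\<in>UNIV. h$i * (if i = j then 1 else 0))"
    by (auto simp: if_distrib cong: if_cong)
  ultimately show "((\<lambda>z. z$j) has_derivative (\<lambda>h. \<Sum>i\<in>UNIV. h$i * (if i = j then 1 else 0))) (at z)"
    by simp
qed auto

lemma CD_add: "CD S f df \<Longrightarrow> CD S g dg \<Longrightarrow> CD S (\<lambda>z. f z + g z) (\<lambda>i z. df i z + dg i z)"
  unfolding CD_def
  by (auto intro!: continuous_intros has_derivative_eq_rhs[OF has_derivative_add]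
      simp: sum.distrib distrib_left)

lemma CD_mult: assumes "CD S f df" "CD S g dg"
  shows "CD S (\<lambda>z. f z * g z) (\<lambda>i z. f z * dg i z + df i z * g z)"
proof -
  have cf: "continuous_on S f" "continuous_on S g" using assms CD_cont by auto
  show ?thesis using assms cf unfolding CD_def
    by (auto intro!: continuous_intros has_derivative_eq_rhs[OF has_derivative_mult]
      simp: sum.distrib algebra_simps sum_distrib_left sum_distrib_right)
qed

lemma CD_sum: "finite A \<Longrightarrow> open S \<Longrightarrow> (\<And>a. a \<in> A \<Longrightarrow> CD S (f a) (df a)) \<Longrightarrow>
  CD S (\<lambda>z. \<Sum>a\<in>A. f a z) (\<lambda>i z. \<Sum>a\<in>A. df a i z)"
proof (induction A rule: finite_induct)
  case empty
  then show ?case using CD_const[of S 0] by simp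
next
  case (insert x F)
  have "CD S (\<lambda>z. f x z + (\<Sum>a\<in>F. f a z)) (\<lambda>i z. df x i z + (\<Sum>a\<in>F. df a i z))"
    by (rule CD_add) (use insert in auto)
  then show ?case using insert by simp
qed

lemma CD_power: assumes "CD S f df"
  shows "CD S (\<lambda>z. f z ^ k) (\<lambda>i z. of_nat k * f z ^ (k - 1) * df i z)"
proof (induction k)
  case 0
  then show ?case using CD_const[of S 1] assms by (simp add: CD_def)
next
  case (Suc k)
  have "CD S (\<lambda>z. f z * f z ^ k) (\<lambda>i z. f z * (of_nat k * f z ^ (k - 1) * df i z) + df i z * f z ^ k)"
    by (rule CD_mult[OF assms Suc])
  moreover have "f z * (of_nat k * f z ^ (k - 1) * df i z) + df i z * f z ^ k =
      of_nat (Suc k) * f z ^ (Suc k - 1) * df i z" for z i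
    by (cases k) (auto simp: algebra_simps)
  ultimately show ?case by simp
qed

lemma CD_inverse: assumes "CD S f df" "\<And>z. z \<in> S \<Longrightarrow> f z \<noteq> 0"
  shows "CD S (\<lambda>z. inverse (f z)) (\<lambda>i z. - (inverse (f z) * df i z * inverse (f z)))"
proof -
  have cf: "continuous_on S f" using assms CD_cont by auto
  have "((\<lambda>z. inverse (f z)) has_derivative (\<lambda>h. \<Sum>i\<in>UNIV. h$i * - (inverse (f z) * df i z * inverse (f z)))) (at z)"
    if z: "z \<in> S" for z
  proof -
    have d: "(f has_derivative (\<lambda>h. \<Sum>i\<in>UNIV. h$i * df i z)) (at z)" using assms z unfolding CD_def by auto
    show ?thesis
      by (rule has_derivative_eq_rhs[OF Deriv.has_derivative_inverse[OF assms(2)[OF z] d]])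
        (simp add: sum_negf algebra_simps sum_distrib_left sum_distrib_right)
  qed
  then show ?thesis using assms cf unfolding CD_def
    by (auto intro!: continuous_intros)
qed

lemma CD_cmod: fixes f :: "complex^'n::finite \<Rightarrow> complex"
  assumes "CD S f df" "\<And>z. z \<in> S \<Longrightarrow> f z \<noteq> 0"
  shows "C1_on S (\<lambda>z. cmod (f z))"
proof (rule C1_coord[where L=Re and e="\<lambda>i z. cnj (f z) * df i z / cmod (f z)"])
  show "bounded_linear Re" by (rule bounded_linear_Re)
  have cf: "continuous_on S f" using assms CD_cont by auto
  show "continuous_on S (\<lambda>z. cnj (f z) * df i z / cmod (f z))" for i
    using assms cf unfolding CD_def by (auto intro!: continuous_intros)
  fix z assume z: "z \<in> S"
  have d: "(f has_derivative (\<lambda>h. \<Sum>i\<in>UNIV. h$i * df i z)) (at z)" using assms z unfolding CD_def by auto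
  have "((\<lambda>z. norm (f z)) has_derivative (\<lambda>h. inner (f z) (\<Sum>i\<in>UNIV. h$i * df i z) / norm (f z))) (at z)"
    using has_derivative_compose[OF d has_derivative_norm[OF assms(2)[OF z]]] 
    by (simp add: o_def inner_divide_left sgn_div_norm divide_inverse mult.commute inner_commute)
  note nd = this
  show "((\<lambda>z. cmod (f z)) has_derivative (\<lambda>h. Re (\<Sum>i\<in>UNIV. h $ i * (cnj (f z) * df i z / cmod (f z))))) (at z)"
  proof (rule has_derivative_eq_rhs[OF nd], rule ext)
    fix h :: "complex^'n"
    define w where "w = (\<Sum>i\<in>UNIV. h$i * df i z)"
    have "(\<Sum>i\<in>UNIV. h $ i * (cnj (f z) * df i z / cmod (f z))) = cnj (f z) * w / complex_of_real (cmod (f z))"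
      unfolding w_def by (simp add: sum_distrib_left sum_divide_distrib algebra_simps)
    then show "inner (f z) w / norm (f z) = Re (\<Sum>i\<in>UNIV. h $ i * (cnj (f z) * df i z / cmod (f z)))"
      by (simp add: Re_divide_of_real inner_complex_def)
  qed
qed


lemma continuous_on_vec_nth' [continuous_intros]:
  fixes f :: "'b::topological_space \<Rightarrow> 'a::real_normed_vector^'n"
  shows "continuous_on S f \<Longrightarrow> continuous_on S (\<lambda>x. f x $ i)"
  using bounded_linear.continuous_on[OF bounded_linear_vec_nth] by blast

lemma has_derivative_vec_nth' [derivative_intros]:
  fixes f :: "'b::real_normed_vector \<Rightarrow> 'a::real_normed_vector^'n"
  shows "(f has_derivative f') F \<Longrightarrow> ((\<lambda>x. f x $ i) has_derivative (\<lambda>h. f' h $ i)) F"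
  by (rule bounded_linear.has_derivative[OF bounded_linear_vec_nth])

definition Hf :: "('n::finite \<Rightarrow> complex) \<Rightarrow> ('n \<Rightarrow> nat) \<Rightarrow> complex^'n \<Rightarrow> complex \<Rightarrow> complex" where
  "Hf c s \<zeta> u = 1 - (\<Sum>n\<in>UNIV. \<zeta>$n * c n * u ^ (s n))"

definition Hu :: "('n::finite \<Rightarrow> complex) \<Rightarrow> ('n \<Rightarrow> nat) \<Rightarrow> complex^'n \<Rightarrow> complex \<Rightarrow> complex" where
  "Hu c s \<zeta> u = - (\<Sum>n\<in>UNIV. \<zeta>$n * c n * (of_nat (s n) * u ^ (s n - 1)))"

lemma Hf_deriv:
  "((\<lambda>p. Hf c s (fst p) (snd p)) has_derivative
     (\<lambda>q. - (\<Sum>n\<in>UNIV. fst q $ n * c n * snd p ^ s n) + Hu c s (fst p) (snd p) * snd q)) (at p)"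
  unfolding Hf_def Hu_def
  apply (rule has_derivative_eq_rhs)
   apply (rule derivative_eq_intros refl | simp)+
  apply (rule ext)
  apply (simp add: sum_negf[symmetric] sum.distrib[symmetric] sum_distrib_left sum_distrib_right algebra_simps)
  done


lemma bl_fst_nth: "bounded_linear (\<lambda>q::(complex^'n::finite) \<times> complex. fst q $ n)"
  by (rule bounded_linear_compose[OF bounded_linear_vec_nth bounded_linear_fst])

lemma bl_J: "bounded_linear (\<lambda>q::(complex^'n::finite) \<times> complex.
    (fst q, (snd q + (\<Sum>n\<in>UNIV. fst q $ n * k n)) / h))"
proof -
  have "bounded_linear (\<lambda>q::(complex^'n::finite) \<times> complex. (snd q + (\<Sum>n\<in>UNIV. fst q $ n * k n)))"
    by (intro bounded_linear_add bounded_linear_snd bounded_linear_sum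
        bounded_linear_compose[OF bounded_linear_mult_left bl_fst_nth])
  then have "bounded_linear (\<lambda>q::(complex^'n::finite) \<times> complex. (snd q + (\<Sum>n\<in>UNIV. fst q $ n * k n)) / h)"
    by (rule bounded_linear_compose[OF bounded_linear_divide])
  then show ?thesis by (intro bounded_linear_Pair bounded_linear_fst)
qed

lemma implicit_u:
  fixes c :: "'n::finite \<Rightarrow> complex" and s :: "'n \<Rightarrow> nat" and \<zeta>0 :: "complex^'n"
  assumes H0: "Hf c s \<zeta>0 u0 = 0" and Hu0: "Hu c s \<zeta>0 u0 \<noteq> 0"
  obtains W u where "open W" "\<zeta>0 \<in> W" "u \<zeta>0 = u0" "\<And>\<zeta>. \<zeta>\<in>W \<Longrightarrow> Hf c s \<zeta> (u \<zeta>) = 0"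
     "\<And>\<zeta>. \<zeta>\<in>W \<Longrightarrow> Hu c s \<zeta> (u \<zeta>) \<noteq> 0"
     "CD W u (\<lambda>i \<zeta>. c i * u \<zeta> ^ s i / Hu c s \<zeta> (u \<zeta>))"
     "\<And>V u' \<zeta>. V \<subseteq> W \<Longrightarrow> connected V \<Longrightarrow> \<zeta>0 \<in> V \<Longrightarrow> continuous_on V u' \<Longrightarrow> u' \<zeta>0 = u0 \<Longrightarrow>
        (\<And>\<zeta>. \<zeta>\<in>V \<Longrightarrow> Hf c s \<zeta> (u' \<zeta>) = 0) \<Longrightarrow> \<zeta>\<in>V \<Longrightarrow> u' \<zeta> = u \<zeta>"
proof -
  define \<Phi> where "\<Phi> p = (fst p, Hf c s (fst p) (snd p))" for p :: "(complex^'n) \<times> complex"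
  define A where "A = Blinfun (\<lambda>q::(complex^'n) \<times> complex. (fst q, 0::complex))"
  define E where "E = Blinfun (\<lambda>m::complex. (0::complex^'n, m))"
  define PN where "PN n = Blinfun (\<lambda>q::(complex^'n) \<times> complex. fst q $ n)" for n
  define SN where "SN = Blinfun (\<lambda>q::(complex^'n) \<times> complex. snd q)"
  define D where "D p = A + (\<Sum>n\<in>UNIV. (E o\<^sub>L (blinfun_mult_left (- (c n * snd p ^ s n)) o\<^sub>L PN n)))
      + (E o\<^sub>L (blinfun_mult_left (Hu c s (fst p) (snd p)) o\<^sub>L SN))" for p
  define h0 where "h0 = Hu c s \<zeta>0 u0"
  define J where "J = Blinfun (\<lambda>q::(complex^'n) \<times> complex.
    (fst q, (snd q + (\<Sum>n\<in>UNIV. fst q $ n * (c n * u0 ^ s n))) / h0))"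
  have blA: "bounded_linear (\<lambda>q::(complex^'n) \<times> complex. (fst q, 0::complex))"
    by (intro bounded_linear_intros)
  have blE: "bounded_linear (\<lambda>m::complex. (0::complex^'n, m))"
    by (intro bounded_linear_intros)
  have DA: "blinfun_apply (D p) q = (fst q, - (\<Sum>n\<in>UNIV. fst q $ n * c n * snd p ^ s n) + Hu c s (fst p) (snd p) * snd q)" for p q
  proof -
    have "blinfun_apply (D p) q = (fst q, 0) + (\<Sum>n\<in>UNIV. (0, fst q $ n * (- (c n * snd p ^ s n))))
       + (0, snd q * Hu c s (fst p) (snd p))"
      unfolding D_def A_def E_def PN_def SN_def
      by (simp add: blinfun.sum_left plus_blinfun.rep_eq bounded_linear_Blinfun_apply[OF blA]
          bounded_linear_Blinfun_apply[OF blE] bounded_linear_Blinfun_apply[OF bl_fst_nth]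
          bounded_linear_Blinfun_apply[OF bounded_linear_snd])
    also have "\<dots> = (fst q, - (\<Sum>n\<in>UNIV. fst q $ n * c n * snd p ^ s n) + Hu c s (fst p) (snd p) * snd q)"
      by (simp add: prod_eq_iff fst_sum snd_sum sum_negf algebra_simps)
    finally show ?thesis .
  qed
  have derD: "(\<Phi> has_derivative blinfun_apply (D p)) (at p)" for p
    unfolding \<Phi>_def
    by (rule has_derivative_eq_rhs[OF has_derivative_Pair[OF has_derivative_fst[OF has_derivative_ident] Hf_deriv]])
      (simp add: DA fun_eq_iff)
  have contD: "continuous_on UNIV D"
    unfolding D_def Hu_def by (intro continuous_intros)
  have JD: "J o\<^sub>L D (\<zeta>0, u0) = id_blinfun"
  proof (rule blinfun_eqI)
    fix q :: "(complex^'n) \<times> complex"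
    show "blinfun_apply (J o\<^sub>L D (\<zeta>0, u0)) q = blinfun_apply id_blinfun q"
      using Hu0 unfolding J_def
      by (simp add: bounded_linear_Blinfun_apply[OF bl_J] DA h0_def mult.assoc prod_eq_iff)
  qed
  obtain U' VV g g' where "open U'" "(\<zeta>0, u0) \<in> U'" "open VV" "\<Phi> (\<zeta>0, u0) \<in> VV"
      and hom: "homeomorphism U' VV \<Phi> g"
      and derg: "\<And>y. y \<in> VV \<Longrightarrow> (g has_derivative (g' y)) (at y)"
      and bij: "\<And>y. y \<in> VV \<Longrightarrow> bij (blinfun_apply (D (g y)))"
    apply (rule inverse_function_theorem[of UNIV \<Phi> D "(\<zeta>0, u0)" J, OF open_UNIV derD contD _ JD])
     apply simp
    apply blast
    done
  have g\<Phi>: "\<And>p. p \<in> U' \<Longrightarrow> g (\<Phi> p) = p" and \<Phi>g: "\<And>y. y\<in>VV \<Longrightarrow> \<Phi> (g y) = y"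
    and gin: "\<And>y. y\<in>VV \<Longrightarrow> g y \<in> U'"
    using hom unfolding homeomorphism_def by auto
  define W where "W = (\<lambda>\<zeta>. (\<zeta>, 0::complex)) -` VV"
  have openW: "open W"
    unfolding W_def by (rule continuous_open_vimage[OF \<open>open VV\<close>]) (intro continuous_intros)
  define u where "u \<zeta> = snd (g (\<zeta>, 0))" for \<zeta>
  have gW: "g (\<zeta>, 0) = (\<zeta>, u \<zeta>) \<and> Hf c s \<zeta> (u \<zeta>) = 0" if "\<zeta> \<in> W" for \<zeta>
  proof -
    have "\<Phi> (g (\<zeta>, 0)) = (\<zeta>, 0)" using \<Phi>g that unfolding W_def by auto
    then show ?thesis unfolding \<Phi>_def u_def by (metis fst_conv prod.collapse snd_conv)
  qed
  have \<Phi>0: "\<Phi> (\<zeta>0, u0) = (\<zeta>0, 0)" unfolding \<Phi>_def using H0 by simp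
  have W0: "\<zeta>0 \<in> W" using \<open>\<Phi> (\<zeta>0, u0) \<in> VV\<close> \<Phi>0 unfolding W_def by simp
  have u0: "u \<zeta>0 = u0"
    using g\<Phi>[OF \<open>(\<zeta>0, u0) \<in> U'\<close>] \<Phi>0 unfolding u_def by simp
  have HuW: "Hu c s \<zeta> (u \<zeta>) \<noteq> 0" if "\<zeta> \<in> W" for \<zeta>
  proof
    assume h: "Hu c s \<zeta> (u \<zeta>) = 0"
    have "bij (blinfun_apply (D (\<zeta>, u \<zeta>)))" using bij[of "(\<zeta>, 0)"] gW[OF that] that unfolding W_def by simp
    then have "inj (blinfun_apply (D (\<zeta>, u \<zeta>)))" by (rule bij_is_inj)
    moreover have "blinfun_apply (D (\<zeta>, u \<zeta>)) (0, 1) = blinfun_apply (D (\<zeta>, u \<zeta>)) (0, 0)"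
      by (simp add: DA h)
    ultimately show False by (metis injD prod.inject zero_neq_one)
  qed
  have derU: "(u has_derivative (\<lambda>h. \<Sum>i\<in>UNIV. h$i * (c i * u \<zeta> ^ s i / Hu c s \<zeta> (u \<zeta>)))) (at \<zeta>)"
    if z: "\<zeta> \<in> W" for \<zeta>
  proof -
    have "(\<zeta>, 0) \<in> VV" using z unfolding W_def by simp
    from derg[OF this] have dg: "(g has_derivative g' (\<zeta>, 0)) (at (\<zeta>, 0))" .
    have "((\<lambda>\<zeta>. (\<zeta>, 0::complex)) has_derivative (\<lambda>h. (h, 0))) (at \<zeta>)"
      by (intro derivative_eq_intros) auto
    from has_derivative_compose[OF this dg]
    have "((\<lambda>\<zeta>. g (\<zeta>, 0)) has_derivative (\<lambda>h. g' (\<zeta>, 0) (h, 0))) (at \<zeta>)" by (simp add: o_def)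
    from has_derivative_snd[OF this]
    have du: "(u has_derivative (\<lambda>h. snd (g' (\<zeta>, 0) (h, 0)))) (at \<zeta>)" unfolding u_def .
    define Du where "Du h = snd (g' (\<zeta>, 0) (h, 0))" for h
    have "((\<lambda>\<zeta>. (\<zeta>, u \<zeta>)) has_derivative (\<lambda>h. (h, Du h))) (at \<zeta>)"
      unfolding Du_def by (intro has_derivative_Pair has_derivative_ident du)
    from has_derivative_compose[OF this Hf_deriv]
    have dK: "((\<lambda>\<zeta>. Hf c s \<zeta> (u \<zeta>)) has_derivative
       (\<lambda>h. - (\<Sum>n\<in>UNIV. h $ n * c n * u \<zeta> ^ s n) + Hu c s \<zeta> (u \<zeta>) * Du h)) (at \<zeta>)"
      by (simp add: o_def)
    have dK0: "((\<lambda>\<zeta>. Hf c s \<zeta> (u \<zeta>)) has_derivative (\<lambda>h. 0)) (at \<zeta>)"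
      by (rule has_derivative_transform_within_open[OF has_derivative_const openW z]) (use gW in auto)
    have "(\<lambda>h. - (\<Sum>n\<in>UNIV. h $ n * c n * u \<zeta> ^ s n) + Hu c s \<zeta> (u \<zeta>) * Du h) = (\<lambda>h. 0)"
      by (rule has_derivative_unique[OF dK dK0])
    then have "Du h = (\<Sum>i\<in>UNIV. h$i * (c i * u \<zeta> ^ s i / Hu c s \<zeta> (u \<zeta>)))" for h
      using HuW[OF z] by (auto simp: fun_eq_iff sum_divide_distrib[symmetric] field_simps mult.assoc
          dest!: spec[of _ h])
    then show ?thesis using du unfolding Du_def by (simp add: fun_eq_iff[symmetric])
  qed
  have contu: "continuous_on W u"
    using derU by (meson continuous_at_imp_continuous_on has_derivative_continuous)
  have contHu: "continuous_on W (\<lambda>\<zeta>. Hu c s \<zeta> (u \<zeta>))"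
    unfolding Hu_def by (intro continuous_intros contu)
  have CDu: "CD W u (\<lambda>i \<zeta>. c i * u \<zeta> ^ s i / Hu c s \<zeta> (u \<zeta>))"
    unfolding CD_def using openW derU HuW
    by (auto intro!: continuous_on_divide contHu continuous_intros contu)
  have uniq: "u' \<zeta> = u \<zeta>" if V: "V \<subseteq> W" "connected V" "\<zeta>0 \<in> V" and cu': "continuous_on V u'"
    and u'0: "u' \<zeta>0 = u0" and Hu': "\<And>\<zeta>. \<zeta>\<in>V \<Longrightarrow> Hf c s \<zeta> (u' \<zeta>) = 0" and z: "\<zeta> \<in> V" for V u' \<zeta>
  proof -
    define T where "T = {\<zeta>\<in>V. u' \<zeta> = u \<zeta>}"
    have T1: "T = V \<inter> (\<lambda>\<zeta>. (\<zeta>, u' \<zeta>)) -` U'"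
    proof (rule set_eqI, rule iffI)
      fix x assume "x \<in> T"
      then show "x \<in> V \<inter> (\<lambda>\<zeta>. (\<zeta>, u' \<zeta>)) -` U'"
        using gW[of x] gin[of "(x,0)"] V unfolding T_def W_def by auto
    next
      fix x assume "x \<in> V \<inter> (\<lambda>\<zeta>. (\<zeta>, u' \<zeta>)) -` U'"
      then have x: "x \<in> V" "(x, u' x) \<in> U'" by auto
      have "\<Phi> (x, u' x) = (x, 0)" using Hu'[OF x(1)] unfolding \<Phi>_def by simp
      then have "g (x, 0) = (x, u' x)" using g\<Phi>[OF x(2)] by simp
      then show "x \<in> T" using gW[of x] x V unfolding T_def by auto
    qed
    have "openin (top_of_set V) T"
      unfolding T1 by (rule continuous_openin_preimage_gen[OF _ \<open>open U'\<close>]) (intro continuous_intros cu')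
    moreover have "closedin (top_of_set V) T"
    proof -
      have "continuous_on V (\<lambda>\<zeta>. u' \<zeta> - u \<zeta>)"
        using cu' continuous_on_subset[OF contu V(1)] by (intro continuous_intros)
      from continuous_closedin_preimage_constant[OF this, of 0]
      show ?thesis unfolding T_def by simp
    qed
    ultimately have "T = {} \<or> T = V" using V(2) unfolding connected_clopen by blast
    moreover have "\<zeta>0 \<in> T" using V(3) u'0 u0 unfolding T_def by simp
    ultimately show ?thesis using z unfolding T_def by auto
  qed
  have HfW: "\<And>\<zeta>. \<zeta> \<in> W \<Longrightarrow> Hf c s \<zeta> (u \<zeta>) = 0" using gW by blast
  show ?thesis
    apply (rule that[of W u])
    apply (rule openW)
    apply (rule W0)
    apply (rule u0)
    apply (erule HfW)
    apply (erule HuW)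
    apply (rule CDu)
    apply (rule uniq; assumption)
    done
qed


lemma Fy_eq: "Fy s y x \<zeta> = 1 - (\<Sum>n\<in>UNIV. \<zeta>$n * x^(s n) * (of_nat (s n) * y^(s n - 1)))"
proof -
  have "((\<lambda>w. Fpoly s w x \<zeta>) has_field_derivative (1 - (\<Sum>n\<in>UNIV. \<zeta>$n * x^(s n) * (of_nat (s n) * y^(s n - 1))))) (at y)"
    unfolding Fpoly_def
    by (rule derivative_eq_intros refl | simp add: mult_ac)+
  then show ?thesis unfolding Fy_def by (rule DERIV_imp_deriv)
qed

lemma Fyy_eq: "Fyy s y x \<zeta> = - (\<Sum>n\<in>UNIV. \<zeta>$n * x^(s n) * (of_nat (s n) * (of_nat (s n - 1) * y^(s n - 1 - 1))))"
proof -
  have "((\<lambda>w. Fy s w x \<zeta>) has_field_derivative (- (\<Sum>n\<in>UNIV. \<zeta>$n * x^(s n) * (of_nat (s n) * (of_nat (s n - 1) * y^(s n - 1 - 1)))))) (at y)"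
    unfolding Fy_eq
    by (rule derivative_eq_intros refl | simp add: mult_ac)+
  then show ?thesis unfolding Fyy_def by (rule DERIV_imp_deriv)
qed

lemma F_u: "Fpoly s y x \<zeta> = y - 1 - (\<Sum>n\<in>UNIV. \<zeta>$n * (x*y)^(s n))"
  unfolding Fpoly_def by (simp add: power_mult_distrib mult.assoc)

lemma F_zero: assumes "\<forall>n. 2 \<le> s n" shows "Fpoly s 0 x \<zeta> = -1"
proof -
  have h: "s n \<noteq> 0" for n using assms[rule_format, of n] by simp
  show ?thesis unfolding Fpoly_def by (simp add: power_0_left h)
qed

lemma Hf_F: assumes "\<forall>n. 1 \<le> s n"
  shows "Hf (\<lambda>n. of_nat (s n - 1)) s \<zeta> (x*y) = y * Fy s y x \<zeta> - Fpoly s y x \<zeta>"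
proof -
  have pn: "\<zeta>$n * of_nat (s n - 1) * (x*y)^(s n) =
      y * (\<zeta>$n * x^(s n) * (of_nat (s n) * y^(s n - 1))) - \<zeta>$n * (x*y)^(s n)" for n
  proof -
    obtain k where k: "s n = Suc k" using assms[rule_format, of n]
      by (metis Suc_diff_le diff_Suc_1)
    show ?thesis unfolding k by (simp add: power_mult_distrib algebra_simps)
  qed
  have "Hf (\<lambda>n. of_nat (s n - 1)) s \<zeta> (x*y) = 1 - (\<Sum>n\<in>UNIV. y * (\<zeta>$n * x^(s n) * (of_nat (s n) * y^(s n - 1))) - \<zeta>$n * (x*y)^(s n))"
    unfolding Hf_def using pn by simp
  also have "\<dots> = y * Fy s y x \<zeta> - Fpoly s y x \<zeta>"
    unfolding Fy_eq F_u by (simp add: sum_subtractf sum_distrib_left algebra_simps)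
  finally show ?thesis .
qed

lemma Hu_Fyy: assumes "\<forall>n. 2 \<le> s n"
  shows "y * Fyy s y x \<zeta> = x * Hu (\<lambda>n. of_nat (s n - 1)) s \<zeta> (x*y)"
proof -
  have pn: "y * (\<zeta>$n * x^(s n) * (of_nat (s n) * (of_nat (s n - 1) * y^(s n - 1 - 1)))) =
        x * (\<zeta>$n * of_nat (s n - 1) * (of_nat (s n) * (x*y) ^ (s n - 1)))" for n
  proof -
    obtain k where k: "s n = Suc (Suc k)" using assms[rule_format, of n]
      by (metis add_2_eq_Suc le_Suc_ex)
    show ?thesis unfolding k by (simp add: power_mult_distrib algebra_simps)
  qed
  have "y * Fyy s y x \<zeta> = - (\<Sum>n\<in>UNIV. y * (\<zeta>$n * x^(s n) * (of_nat (s n) * (of_nat (s n - 1) * y^(s n - 1 - 1)))))"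
    unfolding Fyy_eq by (simp add: sum_distrib_left)
  also have "\<dots> = - (\<Sum>n\<in>UNIV. x * (\<zeta>$n * of_nat (s n - 1) * (of_nat (s n) * (x*y) ^ (s n - 1))))"
    by (simp only: pn)
  also have "\<dots> = x * Hu (\<lambda>n. of_nat (s n - 1)) s \<zeta> (x*y)"
    unfolding Hu_def by (simp add: sum_distrib_left)
  finally show ?thesis .
qed


lemma C1_cont: "C1_on S f \<Longrightarrow> continuous_on S f"
  unfolding C1_on_def by (meson continuous_at_imp_continuous_on has_derivative_continuous)

lemma C1_cong: "open S \<Longrightarrow> (\<And>z. z \<in> S \<Longrightarrow> f z = g z) \<Longrightarrow> C1_on S f \<Longrightarrow> C1_on S g"
  unfolding C1_on_def by (meson has_derivative_transform_within_open)

theorem lemma3p7: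
  fixes s :: "'n::finite \<Rightarrow> nat" and \<zeta>c :: "complex^'n" and xc lc :: complex
  assumes "inj s" and "\<forall>n. 2 \<le> s n" and "simple_critical s \<zeta>c xc lc"
  shows "\<exists>V. open V \<and> \<zeta>c \<in> V \<and>
    (\<exists>xs lam. C1_on V xs \<and> C1_on V lam \<and> xs \<zeta>c = xc \<and> lam \<zeta>c = lc \<and>
      (\<forall>\<zeta>\<in>V. Fpoly s (lam \<zeta>) (xs \<zeta>) \<zeta> = 0 \<and> Fy s (lam \<zeta>) (xs \<zeta>) \<zeta> = 0) \<and>
      (\<forall>xs' lam'. C1_on V xs' \<and> C1_on V lam' \<and> xs' \<zeta>c = xc \<and> lam' \<zeta>c = lc \<and>
          (\<forall>\<zeta>\<in>V. Fpoly s (lam' \<zeta>) (xs' \<zeta>) \<zeta> = 0 \<and> Fy s (lam' \<zeta>) (xs' \<zeta>) \<zeta> = 0)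
        \<longrightarrow> (\<forall>\<zeta>\<in>V. xs' \<zeta> = xs \<zeta> \<and> lam' \<zeta> = lam \<zeta>)) \<and>
      ((\<forall>\<zeta>\<in>V. dominant s \<zeta> \<and> xs \<zeta> \<in> sheet_sing_pts s \<zeta>) \<longrightarrow>
         (\<forall>\<zeta>\<in>V. rho_star s \<zeta> = ereal (cmod (xs \<zeta>))) \<and>
         C1_on V (\<lambda>\<zeta>. real_of_ereal (rho_star s \<zeta>))))"
proof -
  note s2 = assms(2)
  have s1: "\<forall>n. 1 \<le> s n" using s2 by (meson le_trans one_le_numeral)
  define c where "c n = (of_nat (s n - 1) :: complex)" for n
  from assms(3) have rho1: "rho_star s \<zeta>c = 1" and xcS: "xc \<in> sheet_sing_pts s \<zeta>c"
    and F0: "Fpoly s lc xc \<zeta>c = 0" and Fy0: "Fy s lc xc \<zeta>c = 0" and Fyy0: "Fyy s lc xc \<zeta>c \<noteq> 0"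
    unfolding simple_critical_def critset_def by auto
  have "cmod xc = 1" using xcS rho1 unfolding sheet_sing_pts_def Let_def by (simp add: one_ereal_def)
  then have xc0: "xc \<noteq> 0" by auto
  have lc0: "lc \<noteq> 0" using F0 F_zero[OF s2, of xc \<zeta>c] by auto
  define u0 where "u0 = xc * lc"
  have H0: "Hf c s \<zeta>c u0 = 0" unfolding c_def u0_def using Hf_F[OF s1] F0 Fy0 by simp
  have Hu0: "Hu c s \<zeta>c u0 \<noteq> 0"
    using Hu_Fyy[OF s2, of lc xc \<zeta>c] Fyy0 lc0 xc0 unfolding c_def u0_def by auto
  obtain W u where openW: "open W" and W0: "\<zeta>c \<in> W" and u0: "u \<zeta>c = u0"
    and HfW: "\<And>\<zeta>. \<zeta>\<in>W \<Longrightarrow> Hf c s \<zeta> (u \<zeta>) = 0"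
    and CDu: "CD W u (\<lambda>i \<zeta>. c i * u \<zeta> ^ s i / Hu c s \<zeta> (u \<zeta>))"
    and uniq: "\<And>V u' \<zeta>. V \<subseteq> W \<Longrightarrow> connected V \<Longrightarrow> \<zeta>c \<in> V \<Longrightarrow> continuous_on V u' \<Longrightarrow> u' \<zeta>c = u0 \<Longrightarrow>
        (\<And>\<zeta>. \<zeta>\<in>V \<Longrightarrow> Hf c s \<zeta> (u' \<zeta>) = 0) \<Longrightarrow> \<zeta>\<in>V \<Longrightarrow> u' \<zeta> = u \<zeta>"
    by (rule implicit_u[OF H0 Hu0]) blast
  define lam where "lam \<zeta> = 1 + (\<Sum>n\<in>UNIV. \<zeta>$n * u \<zeta> ^ s n)" for \<zeta>
  have "\<exists>d. CD W lam d"
    unfolding lam_def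
    apply (rule exI)
    apply (rule CD_add)
     apply (rule CD_const[OF openW])
    apply (rule CD_sum[OF _ openW])
     apply simp
    apply (rule CD_mult)
     apply (rule CD_nth[OF openW])
    apply (rule CD_power[OF CDu])
    done
  then obtain dl where CDl: "CD W lam dl" by blast
  have lamc: "lam \<zeta>c = lc" using F0 unfolding F_u lam_def u0 u0_def by (simp add: mult.commute algebra_simps)
  define W2 where "W2 = {\<zeta>\<in>W. lam \<zeta> \<noteq> 0} \<inter> {\<zeta>\<in>W. u \<zeta> \<noteq> 0}"
  have "W2 = (W \<inter> lam -` (-{0})) \<inter> (W \<inter> u -` (-{0}))" unfolding W2_def by auto
  then have "open W2"
    by (metis open_Int continuous_open_preimage CD_cont[OF CDl] CD_cont[OF CDu] openW open_Compl closed_singleton)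
  moreover have "\<zeta>c \<in> W2" unfolding W2_def using W0 lamc lc0 u0 xc0 unfolding u0_def by auto
  ultimately obtain e where "e > 0" and ballW2: "ball \<zeta>c e \<subseteq> W2" by (meson openE)
  define V where "V = ball \<zeta>c e"
  have VW: "V \<subseteq> W" and lamV: "\<And>\<zeta>. \<zeta>\<in>V \<Longrightarrow> lam \<zeta> \<noteq> 0" and uV: "\<And>\<zeta>. \<zeta>\<in>V \<Longrightarrow> u \<zeta> \<noteq> 0"
    using ballW2 unfolding V_def W2_def by auto
  have openV: "open V" and V0: "\<zeta>c \<in> V" and connV: "connected V" unfolding V_def using \<open>e > 0\<close> by auto
  define xs where "xs \<zeta> = u \<zeta> * inverse (lam \<zeta>)" for \<zeta>
  have CDuV: "CD V u (\<lambda>i \<zeta>. c i * u \<zeta> ^ s i / Hu c s \<zeta> (u \<zeta>))" by (rule CD_subset[OF CDu openV VW])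
  have CDlV: "CD V lam dl" by (rule CD_subset[OF CDl openV VW])
  have CDx: "CD V xs (\<lambda>i z. u z * - (inverse (lam z) * dl i z * inverse (lam z)) +
        c i * u z ^ s i / Hu c s z (u z) * inverse (lam z))"
    unfolding xs_def by (rule CD_mult[OF CDuV CD_inverse[OF CDlV lamV]])
  have xl: "xs \<zeta> * lam \<zeta> = u \<zeta>" if "\<zeta> \<in> V" for \<zeta> using lamV[OF that] unfolding xs_def by simp
  have eqs: "Fpoly s (lam \<zeta>) (xs \<zeta>) \<zeta> = 0 \<and> Fy s (lam \<zeta>) (xs \<zeta>) \<zeta> = 0" if z: "\<zeta> \<in> V" for \<zeta>
  proof -
    have "Fpoly s (lam \<zeta>) (xs \<zeta>) \<zeta> = lam \<zeta> - 1 - (\<Sum>n\<in>UNIV. \<zeta>$n * u \<zeta> ^ s n)"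
      by (simp only: F_u xl[OF z])
    then have F: "Fpoly s (lam \<zeta>) (xs \<zeta>) \<zeta> = 0" by (simp add: lam_def)
    have "Hf c s \<zeta> (xs \<zeta> * lam \<zeta>) = 0" using HfW[of \<zeta>] VW z xl[OF z] by auto
    then have "lam \<zeta> * Fy s (lam \<zeta>) (xs \<zeta>) \<zeta> = 0" using Hf_F[OF s1, of \<zeta> "xs \<zeta>" "lam \<zeta>"] F
      unfolding c_def by simp
    then show ?thesis using F lamV[OF z] by simp
  qed
  have xsc: "xs \<zeta>c = xc" unfolding xs_def using lamc u0 lc0 unfolding u0_def by simp
  show ?thesis
  proof (intro exI conjI ballI allI impI)
    show "open V" "\<zeta>c \<in> V" by (fact openV, fact V0)
    show "C1_on V xs" by (rule CD_C1[OF CDx])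
    show "C1_on V lam" by (rule CD_C1[OF CDlV])
    show "xs \<zeta>c = xc" "lam \<zeta>c = lc" by (fact xsc, fact lamc)
    fix \<zeta> assume "\<zeta> \<in> V"
    then show "Fpoly s (lam \<zeta>) (xs \<zeta>) \<zeta> = 0" "Fy s (lam \<zeta>) (xs \<zeta>) \<zeta> = 0" using eqs by auto
  next
    fix xs' lam' \<zeta>
    assume h: "C1_on V xs' \<and> C1_on V lam' \<and> xs' \<zeta>c = xc \<and> lam' \<zeta>c = lc \<and>
          (\<forall>\<zeta>\<in>V. Fpoly s (lam' \<zeta>) (xs' \<zeta>) \<zeta> = 0 \<and> Fy s (lam' \<zeta>) (xs' \<zeta>) \<zeta> = 0)"
      and z: "\<zeta> \<in> V"
    have l'0: "lam' z \<noteq> 0" if "z \<in> V" for z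
      using h that F_zero[OF s2, of "xs' z" z] by force
    have cu': "continuous_on V (\<lambda>z. xs' z * lam' z)"
      using h by (intro continuous_intros C1_cont) auto
    have Hf': "Hf c s z (xs' z * lam' z) = 0" if "z \<in> V" for z
      using h that Hf_F[OF s1, of z "xs' z" "lam' z"] unfolding c_def by auto
    have ueq: "xs' z * lam' z = u z" if "z \<in> V" for z
      by (rule uniq[OF VW connV V0 cu' _ Hf' that]) (use h u0_def in auto)
    have "lam' \<zeta> = 1 + (\<Sum>n\<in>UNIV. \<zeta>$n * (xs' \<zeta> * lam' \<zeta>) ^ s n)"
      using h z F_u[of s "lam' \<zeta>" "xs' \<zeta>" \<zeta>] by (auto simp: algebra_simps)
    then show lam_eq: "lam' \<zeta> = lam \<zeta>" unfolding lam_def using ueq[OF z] by simp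
    show "xs' \<zeta> = xs \<zeta>" using ueq[OF z] lam_eq l'0[OF z] unfolding xs_def
      by (simp add: field_simps)
  next
    assume h: "\<forall>\<zeta>\<in>V. dominant s \<zeta> \<and> xs \<zeta> \<in> sheet_sing_pts s \<zeta>"
    have xs0: "xs \<zeta> \<noteq> 0" if "\<zeta> \<in> V" for \<zeta> using uV[OF that] lamV[OF that] unfolding xs_def by simp
    have req: "rho_star s \<zeta> = ereal (cmod (xs \<zeta>))" if z: "\<zeta> \<in> V" for \<zeta>
    proof -
      have "cmod (xs \<zeta>) = real_of_ereal (rho_star s \<zeta>)"
        using h z unfolding sheet_sing_pts_def Let_def by auto
      moreover have "cmod (xs \<zeta>) \<noteq> 0" using xs0[OF z] by simp
      ultimately show ?thesis by (cases "rho_star s \<zeta>") auto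
    qed
    then show "rho_star s \<zeta> = ereal (cmod (xs \<zeta>))" if "\<zeta> \<in> V" for \<zeta> using that by blast
    show "C1_on V (\<lambda>\<zeta>. real_of_ereal (rho_star s \<zeta>))"
      by (rule C1_cong[OF openV _ CD_cmod[OF CDx xs0]]) (simp add: req)
  qed
qed

end
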